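(* In the standing setting below, let $x'\in\mathbb{X}$, $y_0,y_1\in\mathbb{Y}$ with $y_0\ne y_1$, $f_i(x)=-c(x,y_i)+c(x',y_i)$ for $i=0,1$, and $S=\{x\in\mathbb{X}: f_0(x)\le f_1(x)\}$. Then the interior of $S$ is contained in $\{x\in\mathbb{X}: f_0(x)<f_1(x)\}$, and the boundary $\partial S$ contains $\{x\in\mathbb{X}: f_0(x)=f_1(x)\}$.
   Context: Standing setting: $\mathbb{X},\mathbb{Y}\subset\mathbb{R}^n$ are compact with non-empty interior; $c:\mathbb{X}\times\mathbb{Y}\to\mathbb{R}$ has continuous $D_xc$, $D_yc$, and continuous mixed second derivatives with $D^2_{xy}c=(D^2_{yx}c)^T$; for each $x$ the map $y\mapsto -D_xc(x,y)$ is injective on $\mathbb{Y}$ and for each $y$ the map $x\mapsto -D_yc(x,y)$ is injective on $\mathbb{X}$; $D^2_{xy}c(x,y)$ is invertible everywhere; for every $y$ the set $\{-D_yc(x,y):x\in\mathbb{X}\}$ is convex and for every $x$ the set $\{-D_xc(x,y):y\in\mathbb{Y}\}$ is convex. Interior and boundary are taken in $\mathbb{R}^n$. *)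

theory Defs
  imports "HOL-Analysis.Analysis"
begin

end

theory Submission
  imports Defs
begin

theorem corollary2p20:
  fixes X Y :: "(real ^ 'n) set"
    and c :: "real ^ 'n \<Rightarrow> real ^ 'n \<Rightarrow> real"
    and Dx Dy :: "real ^ 'n \<Rightarrow> real ^ 'n \<Rightarrow> real ^ 'n"
    and Dxy Dyx :: "real ^ 'n \<Rightarrow> real ^ 'n \<Rightarrow> real ^ 'n ^ 'n"
    and x' y0 y1 :: "real ^ 'n"
  assumes X_compact: "compact X" and X_int: "interior X \<noteq> {}"
    and Y_compact: "compact Y" and Y_int: "interior Y \<noteq> {}"
    and Dx_deriv: "\<And>x y. x \<in> X \<Longrightarrow> y \<in> Y \<Longrightarrow>
        ((\<lambda>u. c u y) has_derivative (\<lambda>h. Dx x y \<bullet> h)) (at x within X)"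
    and Dy_deriv: "\<And>x y. x \<in> X \<Longrightarrow> y \<in> Y \<Longrightarrow>
        ((\<lambda>v. c x v) has_derivative (\<lambda>h. Dy x y \<bullet> h)) (at y within Y)"
    and Dx_cont: "continuous_on (X \<times> Y) (\<lambda>(x, y). Dx x y)"
    and Dy_cont: "continuous_on (X \<times> Y) (\<lambda>(x, y). Dy x y)"
    and Dxy_deriv: "\<And>x y. x \<in> X \<Longrightarrow> y \<in> Y \<Longrightarrow>
        ((\<lambda>v. Dx x v) has_derivative (\<lambda>h. Dxy x y *v h)) (at y within Y)"
    and Dyx_deriv: "\<And>x y. x \<in> X \<Longrightarrow> y \<in> Y \<Longrightarrow>
        ((\<lambda>u. Dy u y) has_derivative (\<lambda>h. Dyx x y *v h)) (at x within X)"
    and Dxy_cont: "continuous_on (X \<times> Y) (\<lambda>(x, y). Dxy x y)"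
    and Dyx_cont: "continuous_on (X \<times> Y) (\<lambda>(x, y). Dyx x y)"
    and mixed_sym: "\<And>x y. x \<in> X \<Longrightarrow> y \<in> Y \<Longrightarrow> Dxy x y = transpose (Dyx x y)"
    and twist_x: "\<And>x. x \<in> X \<Longrightarrow> inj_on (\<lambda>y. - Dx x y) Y"
    and twist_y: "\<And>y. y \<in> Y \<Longrightarrow> inj_on (\<lambda>x. - Dy x y) X"
    and nondeg: "\<And>x y. x \<in> X \<Longrightarrow> y \<in> Y \<Longrightarrow> invertible (Dxy x y)"
    and conv_y: "\<And>y. y \<in> Y \<Longrightarrow> convex ((\<lambda>x. - Dy x y) ` X)"
    and conv_x: "\<And>x. x \<in> X \<Longrightarrow> convex ((\<lambda>y. - Dx x y) ` Y)"
    and x'_in: "x' \<in> X" and y0_in: "y0 \<in> Y" and y1_in: "y1 \<in> Y" and y01: "y0 \<noteq> y1"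
  defines "f0 \<equiv> (\<lambda>x. - c x y0 + c x' y0)"
    and "f1 \<equiv> (\<lambda>x. - c x y1 + c x' y1)"
    and "S \<equiv> {x \<in> X. - c x y0 + c x' y0 \<le> - c x y1 + c x' y1}"
  shows "interior S \<subseteq> {x \<in> X. f0 x < f1 x} \<and> {x \<in> X. f0 x = f1 x} \<subseteq> frontier S"
proof -
  have int: "interior S \<subseteq> {x \<in> X. f0 x < f1 x}"
  proof
    fix x assume xT: "x \<in> interior S"
    have SX: "S \<subseteq> X" unfolding S_def by auto
    have xS: "x \<in> S" using xT interior_subset by blast
    hence xX: "x \<in> X" using SX by blast
    have xiX: "x \<in> interior X" using xT interior_mono[OF SX] by blast
    have le: "f0 x \<le> f1 x" using xS unfolding S_def f0_def f1_def by auto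
    show "x \<in> {x \<in> X. f0 x < f1 x}"
    proof (rule ccontr)
      assume "x \<notin> {x \<in> X. f0 x < f1 x}"
      hence eq: "f0 x = f1 x" using le xX by auto
      define g where "g = (\<lambda>u. c u y1 - c u y0)"
      have dg: "(g has_derivative (\<lambda>h. Dx x y1 \<bullet> h - Dx x y0 \<bullet> h)) (at x within X)"
        unfolding g_def by (intro has_derivative_diff Dx_deriv xX y0_in y1_in)
      have dg': "(g has_derivative (\<lambda>h. Dx x y1 \<bullet> h - Dx x y0 \<bullet> h)) (at x)"
        using dg at_within_interior[OF xiX] by simp
      have mx: "\<forall>u\<in>interior S. g u \<le> g x"
      proof
        fix u assume "u \<in> interior S"
        hence "u \<in> S" using interior_subset by blast
        thus "g u \<le> g x" using eq unfolding S_def g_def f0_def f1_def by auto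
      qed
      have z: "(\<lambda>h. Dx x y1 \<bullet> h - Dx x y0 \<bullet> h) = (\<lambda>v. 0)"
        by (rule differential_zero_maxmin[OF xT open_interior dg']) (use mx in blast)
      have "Dx x y1 \<bullet> (Dx x y1 - Dx x y0) - Dx x y0 \<bullet> (Dx x y1 - Dx x y0) = 0"
        using fun_cong[OF z, of "Dx x y1 - Dx x y0"] by simp
      hence "(Dx x y1 - Dx x y0) \<bullet> (Dx x y1 - Dx x y0) = 0"
        by (simp add: inner_diff_left)
      hence "Dx x y1 = Dx x y0" by simp
      hence "- Dx x y0 = - Dx x y1" by simp
      hence "y0 = y1" using twist_x[OF xX] y0_in y1_in by (meson inj_onD)
      thus False using y01 by simp
    qed
  qed
  moreover have "{x \<in> X. f0 x = f1 x} \<subseteq> frontier S"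
  proof
    fix x assume x: "x \<in> {x \<in> X. f0 x = f1 x}"
    hence "x \<in> S" unfolding S_def f0_def f1_def by auto
    hence "x \<in> closure S" using closure_subset by blast
    moreover have "x \<notin> interior S" using int x by auto
    ultimately show "x \<in> frontier S" unfolding frontier_def by blast
  qed
  ultimately show ?thesis by blast
qed

end
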